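(* Let $(X,\pi)$ be a symmetric two-player game with relative payoff function $\Delta$. If $X$ is compact and $\Delta$ is upper semicontinuous and additively separable, then imitation is essentially unbeatable.
   Context: A symmetric two-player game $(X,\pi)$: common action set $X$ (here a topological space) and bounded payoff $\pi:X\times X\to\mathbb{R}$, $\pi(x,y)$ = payoff of the player choosing $x$ against $y$. Relative payoff: $\Delta(x,y)=\pi(x,y)-\pi(y,x)$; it is additively separable if $\Delta(x,y)=f(x)+g(y)$ for some functions $f,g:X\to\mathbb{R}$. Let $\hat\Delta:=\max_{x,y\in X}\Delta(x,y)$. Imitate-the-best: given initial $y_0\in X$ and any opponent sequence $(x_t)_{t\ge0}$ in $X$, $y_t=x_{t-1}$ if $\Delta(x_{t-1},y_{t-1})>0$ and $y_t=y_{t-1}$ otherwise. Imitation is essentially unbeatable if for every $y_0\in X$ and every sequence $(x_t)$, $\limsup_{T\to\infty}\sum_{t=0}^T\Delta(x_t,y_t)\le\hat\Delta$. *)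

theory Defs
  imports "HOL-Analysis.Analysis"
begin

definition rel_payoff :: "('a \<Rightarrow> 'a \<Rightarrow> real) \<Rightarrow> 'a \<Rightarrow> 'a \<Rightarrow> real" where
  "rel_payoff \<pi> x y = \<pi> x y - \<pi> y x"

definition upper_semicont :: "('b::topological_space \<Rightarrow> real) \<Rightarrow> bool" where
  "upper_semicont f \<longleftrightarrow> (\<forall>c. open {p. f p < c})"

definition additively_separable :: "('a \<Rightarrow> 'a \<Rightarrow> real) \<Rightarrow> bool" where
  "additively_separable D \<longleftrightarrow> (\<exists>f g. \<forall>x y. D x y = f x + g y)"

text \<open>Maximal relative payoff (attained under the hypotheses of the theorem).\<close>
definition max_rel_payoff :: "('a \<Rightarrow> 'a \<Rightarrow> real) \<Rightarrow> real" where
  "max_rel_payoff D = (SUP p\<in>UNIV. D (fst p) (snd p))"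

primrec imitate :: "('a \<Rightarrow> 'a \<Rightarrow> real) \<Rightarrow> 'a \<Rightarrow> (nat \<Rightarrow> 'a) \<Rightarrow> nat \<Rightarrow> 'a" where
  "imitate D y0 xs 0 = y0"
| "imitate D y0 xs (Suc t) =
     (if D (xs t) (imitate D y0 xs t) > 0 then xs t else imitate D y0 xs t)"

definition essentially_unbeatable :: "('a \<Rightarrow> 'a \<Rightarrow> real) \<Rightarrow> bool" where
  "essentially_unbeatable D \<longleftrightarrow>
     (\<forall>y0 xs. limsup (\<lambda>T. ereal (\<Sum>t\<le>T. D (xs t) (imitate D y0 xs t)))
               \<le> ereal (max_rel_payoff D))"

end

theory Submission
  imports Defs
begin

theorem proposition3:
  fixes \<pi> :: "'a::topological_space \<Rightarrow> 'a \<Rightarrow> real"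
  assumes bounded: "\<exists>B. \<forall>x y. \<bar>\<pi> x y\<bar> \<le> B"
    and compact: "compact (UNIV :: 'a set)"
    and usc: "upper_semicont (\<lambda>p::'a \<times> 'a. rel_payoff \<pi> (fst p) (snd p))"
    and sep: "additively_separable (rel_payoff \<pi>)"
  shows "essentially_unbeatable (rel_payoff \<pi>)"
proof -
  define D where "D = rel_payoff \<pi>"
  obtain f g where fg: "\<And>x y. D x y = f x + g y"
    using sep unfolding additively_separable_def D_def by blast
  have gf: "g x = - f x" for x
  proof -
    have "D x x = 0" unfolding D_def rel_payoff_def by simp
    then show ?thesis using fg[of x x] by simp
  qed
  have Df: "D x y = f x - f y" for x y using fg gf by simp
  obtain B where B: "\<And>x y. \<bar>\<pi> x y\<bar> \<le> B" using bounded by blast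
  have Dle: "D x y \<le> 2 * B" for x y
    using B[of x y] B[of y x] unfolding D_def rel_payoff_def by linarith
  have bdd: "bdd_above ((\<lambda>p. D (fst p) (snd p)) ` UNIV)"
    by (rule bdd_aboveI[of _ "2*B"]) (auto intro: Dle)
  have Dmax: "D x y \<le> max_rel_payoff D" for x y
    unfolding max_rel_payoff_def
    using cSUP_upper[OF _ bdd, of "(x,y)"] by simp
  show ?thesis
    unfolding essentially_unbeatable_def D_def[symmetric]
  proof (intro allI)
    fix y0 xs
    define y where "y = imitate D y0 xs"
    have step: "D (xs t) (y t) \<le> f (y (Suc t)) - f (y t)" for t
      unfolding y_def by (auto simp: Df)
    have key: "(\<Sum>t\<le>T. D (xs t) (y t)) \<le> D (y (Suc T)) y0" for T
    proof (induction T)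
      case 0
      then show ?case using step[of 0] by (simp add: Df y_def)
    next
      case (Suc T)
      then show ?case using step[of "Suc T"] by (simp add: Df)
    qed
    have "limsup (\<lambda>T. ereal (\<Sum>t\<le>T. D (xs t) (y t))) \<le> ereal (max_rel_payoff D)"
      by (rule Limsup_bounded) (simp add: order_trans[OF key Dmax])
    then show "limsup (\<lambda>T. ereal (\<Sum>t\<le>T. D (xs t) (imitate D y0 xs t))) \<le> ereal (max_rel_payoff D)"
      by (simp add: y_def)
  qed
qed

end
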